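(* Each of the following, with the convention $\boldsymbol{\alpha}_0=\boldsymbol{\beta}_0=1$ and the displayed formulas valid for $n\ge1$, is a WP-Bailey pair (with the indicated value of $a$, and arbitrary generic $k$): (i) ($a=q$) $\boldsymbol{\alpha}_n=\dfrac{(-1)^n(q^{-n}-q^{n+1})}{1-q}$, $\boldsymbol{\beta}_n=\dfrac{(-1)^n(k^2;q^2)_n}{q^n(q^2;q^2)_n}$; (ii) ($a=q$) $\boldsymbol{\alpha}_n=\dfrac{q^{-n/2}+q^{n/2+1/2}}{1+q^{1/2}}$, $\boldsymbol{\beta}_n=\dfrac{(k,kq^{-1/2};q)_n}{(q^{3/2},q;q)_n}\,q^{-n/2}$; (iii) ($a=1$) $\boldsymbol{\alpha}_n=(-1)^nq^{-n^2/2}(q^{-n/2}+q^{n/2})$, $\boldsymbol{\beta}_n=\dfrac{(-1)^n(k;q)_n}{q^{(n^2+n)/2}(q;q)_n}$.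
   Context: Notation: $(x;q)_n=\prod_{i=0}^{n-1}(1-xq^i)$, $(x_1,\dots,x_j;q)_n=(x_1;q)_n\cdots(x_j;q)_n$. A pair of sequences $(\boldsymbol{\alpha}_n(a,k,q),\boldsymbol{\beta}_n(a,k,q))_{n\ge0}$ is a WP-Bailey pair (relative to $a$, with parameter $k$) if $\boldsymbol{\alpha}_0=1$ and for all $n\ge0$ \[\boldsymbol{\beta}_n=\sum_{j=0}^n\frac{(k/a;q)_{n-j}(k;q)_{n+j}}{(q;q)_{n-j}(aq;q)_{n+j}}\boldsymbol{\alpha}_j.\] *)

theory Defs
  imports Complex_Main
begin

definition qpoch :: "complex \<Rightarrow> complex \<Rightarrow> nat \<Rightarrow> complex" where
  "qpoch x q n = (\<Prod>i<n. 1 - x * q ^ i)"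

definition WP_Bailey_pair ::
  "complex \<Rightarrow> complex \<Rightarrow> complex \<Rightarrow> (nat \<Rightarrow> complex) \<Rightarrow> (nat \<Rightarrow> complex) \<Rightarrow> bool" where
  "WP_Bailey_pair a k q \<alpha> \<beta> \<longleftrightarrow>
     \<alpha> 0 = 1 \<and>
     (\<forall>n. \<beta> n = (\<Sum>j=0..n. qpoch (k / a) q (n - j) * qpoch k q (n + j)
                      / (qpoch q q (n - j) * qpoch (a * q) q (n + j)) * \<alpha> j))"

end

theory Submission
  imports Defs
begin


lemma qpoch_0 [simp]: "qpoch x q 0 = 1" by (simp add: qpoch_def)
lemma qpoch_Suc: "qpoch x q (Suc n) = qpoch x q n * (1 - x * q ^ n)"
  by (simp add: qpoch_def)

lemma rearr_test:
  fixes A B C D a b c d e f :: complex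
  shows "(A*(1-a))*(B*(1-b))/((C*(1-c))*(D*(1-d)))*(e*f) = (A*B/(C*D)*f) * ((1-a)*(1-b)/((1-c)*(1-d))*e)"
  by (simp add: divide_inverse inverse_mult_distrib mult_ac)

lemma tele:
  fixes F :: "nat \<Rightarrow> nat \<Rightarrow> complex" and G :: "nat \<Rightarrow> complex"
  assumes "\<And>j. j \<le> n \<Longrightarrow> F (Suc n) j - c * F n j = G (Suc j) - G j"
    and "F (Suc n) (Suc n) + G (Suc n) - G 0 = 0"
  shows "(\<Sum>j=0..Suc n. F (Suc n) j) = c * (\<Sum>j=0..n. F n j)"
proof -
  have "(\<Sum>j=0..Suc n. F (Suc n) j) = (\<Sum>j=0..n. F (Suc n) j) + F (Suc n) (Suc n)" by simp
  also have "(\<Sum>j=0..n. F (Suc n) j) = (\<Sum>j=0..n. c * F n j + (G (Suc j) - G j))"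
    using assms(1) by (intro sum.cong) (auto simp: algebra_simps)
  also have "\<dots> = c * (\<Sum>j=0..n. F n j) + (G (Suc n) - G 0)"
    by (simp add: sum.distrib sum_distrib_left sum_Suc_diff)
  finally show ?thesis using assms(2) by algebra
qed

lemma WP_intro:
  fixes a k q :: complex and \<alpha> \<beta> :: "nat \<Rightarrow> complex" and c :: "nat \<Rightarrow> complex"
  assumes "\<alpha> 0 = 1" "\<beta> 0 = 1"
   and "\<And>n. (\<Sum>j=0..Suc n. qpoch (k / a) q (Suc n - j) * qpoch k q (Suc n + j) / (qpoch q q (Suc n - j) * qpoch (a * q) q (Suc n + j)) * \<alpha> j)
         = c n * (\<Sum>j=0..n. qpoch (k / a) q (n - j) * qpoch k q (n + j) / (qpoch q q (n - j) * qpoch (a * q) q (n + j)) * \<alpha> j)"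
   and "\<And>n. \<beta> (Suc n) = c n * \<beta> n"
  shows "WP_Bailey_pair a k q \<alpha> \<beta>"
  unfolding WP_Bailey_pair_def
proof (intro conjI allI)
  show "\<alpha> 0 = 1" by fact
  fix n show "\<beta> n = (\<Sum>j=0..n. qpoch (k / a) q (n - j) * qpoch k q (n + j) / (qpoch q q (n - j) * qpoch (a * q) q (n + j)) * \<alpha> j)"
  proof (induction n)
    case 0 then show ?case using assms(1,2) by simp
  next
    case (Suc n) then show ?case using assms(3,4) by simp
  qed
qed

lemma core2:
  fixes r q x u k d0 d1 d2 d3 d4 :: complex
  assumes H: "q = r^2" "d0 = 1 + r" "d1 = 1 - q*x" "d2 = 1 - q*q*(x*u^2)" "d3 = 1 - r^3*(x*u)"
    "d4 = 1 - q*(x*u)"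
  assumes NZ: "r \<noteq> 0" "q \<noteq> 0" "d0 \<noteq> 0" "d1 \<noteq> 0" "d2 \<noteq> 0" "d3 \<noteq> 0" "d4 \<noteq> 0"
  shows "(1 - k/q*x)*(1 - k*(x*u^2))/(d1*d2) * ((1 + r*u)/d0)
      - ((1 - k*(x*u))*(1 - k/r*(x*u))/(d3*d4) * (1/r)) * ((1 + r*u)/d0)
    = (-(1 - k*q*((x*u)*(x*u)))/(d0*d4*d3)) * (1 - k*(x*u^2))/d2 * ((1 - q*u)/r)
    - (-(1 - k*q*((x*u)*(x*u)))/(d0*d4*d3)) * (1 - k/q*x)/d1 * (1 - u)"
proof -
  have P: "(1+r*u)*((q-k*x)*(1-k*x*u^2)*d3*d4*r^2 - (1-k*x*u)*(r-k*x*u)*d1*d2*q)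
    = -(1-k*q*x^2*u^2)*((1-k*x*u^2)*(1-q*u)*d1*q*r - (q-k*x)*(1-u)*d2*r^2)"
    unfolding H by algebra
  show ?thesis using NZ apply (simp add: field_simps)
    using P by algebra
qed


lemma core2fin:
  fixes r q X k d0 d1 d2 d3 :: complex
  assumes H: "q = r^2" "d0 = 1 + r" "d1 = 1 - q*q*(q*(X*X))" "d2 = 1 - q*X" "d3 = 1 - r^3*X"
  assumes NZ: "r \<noteq> 0" "d0 \<noteq> 0" "d1 \<noteq> 0" "d2 \<noteq> 0" "d3 \<noteq> 0"
  shows "(1 - k*(q*(X*X)))/d1 * ((1 + r*(q*X))/d0)
     + (-(1 - k*q*(X*X))/(d0*d2*d3)) * (1 - q*X) = 0"
proof -
  have P: "(1-k*q*(X*X))*(1+r*(q*X))*d2*d3 = (1-k*q*(X*X))*(1-q*X)*d1"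
    unfolding H by algebra
  show ?thesis using NZ apply (simp add: field_simps)
    using P H(4) by algebra
qed

lemma core1:
  fixes q x u k d0 d1 d2 d3 :: complex
  assumes H: "d0 = 1 - q" "d1 = 1 - q*x" "d2 = 1 - q*q*(x*u^2)" "d3 = 1 - q^2*((x*u)^2)"
  assumes NZ: "q \<noteq> 0" "d0 \<noteq> 0" "d1 \<noteq> 0" "d2 \<noteq> 0" "d3 \<noteq> 0"
  shows "(1 - k/q*x)*(1 - k*(x*u^2))/(d1*d2) * ((1 - q*u^2)/d0)
      - (-(1 - k^2*((x*u)^2))/(q*d3)) * ((1 - q*u^2)/d0)
    = (-(1 - k*q*((x*u)*(x*u)))/(d0*d3)) * (1 - k*(x*u^2))/d2 * (-(1 - q^2*u^2)/q)
    - (-(1 - k*q*((x*u)*(x*u)))/(d0*d3)) * (1 - k/q*x)/d1 * (1 - u^2)"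
proof -
  have P: "(q-k*x)*(1-k*x*u^2)*(1-q*u^2)*d3*q + (1-k*k*x*x*u*u)*(1-q*u^2)*d1*d2*q
     = (1-k*q*x*x*u*u)*(1-k*x*u^2)*(1-q*q*u*u)*d1*q + (1-k*q*x*x*u*u)*(q-k*x)*(1-u*u)*d2*q"
    unfolding H by algebra
  show ?thesis using NZ apply (simp add: field_simps)
    using P by algebra
qed

lemma core1fin:
  fixes q X k d0 d1 d3 :: complex
  assumes H: "d0 = 1 - q" "d1 = 1 - q*q*(q*(X*X))" "d3 = 1 - q^2*(X^2)"
  assumes NZ: "q \<noteq> 0" "d0 \<noteq> 0" "d1 \<noteq> 0" "d3 \<noteq> 0"
  shows "(1 - k*(q*(X*X)))/d1 * ((1 - q*(q*X)^2)/d0)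
     + (-(1 - k*q*(X*X))/(d0*d3)) * (1 - (q*X)^2) = 0"
proof -
  have P: "(1-k*q*X*X)*(1-q*(q*X)^2)*d3 = (1-k*q*X*X)*(1-(q*X)^2)*d1"
    unfolding H by algebra
  show ?thesis using NZ apply (simp add: field_simps)
    using P by algebra
qed

lemma core3:
  fixes q x u k d1 d2 d4 :: complex
  assumes H: "d1 = 1 - q*x" "d2 = 1 - q*(x*u^2)" "d4 = 1 - q*(x*u)"
  assumes NZ: "q \<noteq> 0" "x \<noteq> 0" "u \<noteq> 0" "d1 \<noteq> 0" "d2 \<noteq> 0" "d4 \<noteq> 0"
  shows "(1 - k*x)*(1 - k*(x*u^2))/(d1*d2) * (1 + u)
      - (-(1 - k*(x*u))/(d4*(q*(x*u)))) * (1 + u)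
    = (-(1 - k*(x*u))/d4 - 1/(q*(x*u))) * (1 - k*(x*u^2))/d2 * (-1)
    - (-(1 - k*(x*u))/d4 - 1/(q*(x*u))) * (1 - k*x)/d1 * u"
proof -
  have P: "(1-k*x)*(1-k*x*u^2)*(1+u)*d4*q*x*u + (1-k*x*u)*(1+u)*d1*d2
     = (1-k*x*u^2)*((1-k*x*u)*d1*q*x*u + d1*d4) + (1-k*x)*u*((1-k*x*u)*d2*q*x*u + d2*d4)"
    unfolding H by algebra
  show ?thesis using NZ apply (simp add: field_simps)
    using P by algebra
qed

lemma core3fin:
  fixes q X k d1 d4 :: complex
  assumes H: "d1 = 1 - q*(q*(X*X))" "d4 = 1 - q*X"
  assumes NZ: "q \<noteq> 0" "X \<noteq> 0" "d1 \<noteq> 0" "d4 \<noteq> 0"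
  shows "(1 - k*(q*(X*X)))/d1 * (1 + q*X) + (-(1 - k*X)/d4 - 1/(q*X)) * (q*X) = 0"
proof -
  have P: "(1-k*q*X*X)*(1+q*X)*d4*q*X + q*X*(-(1-k*X)*d1*q*X - d1*d4) = 0"
    unfolding H by algebra
  show ?thesis using NZ apply (simp add: field_simps)
    using P by algebra
qed


lemma lin1:
  fixes a b c e h D :: complex
  assumes "a - c*b = e - h" shows "D*a - c*(D*b) = D*e - D*h"
proof -
  have "D*a - c*(D*b) = D*(a - c*b)" by (simp add: algebra_simps)
  also have "\<dots> = D*(e - h)" using assms by simp
  finally show ?thesis by (simp add: algebra_simps)
qed

lemma lin2:
  fixes a e D :: complex
  assumes "a + e = 0" shows "D*a + D*e - 0 = 0"
  using assms by (metis diff_zero distrib_left mult_zero_right)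

definition rp :: "complex \<Rightarrow> complex \<Rightarrow> bool" where "rp r z \<longleftrightarrow> (\<exists>N::nat. z = r^N)"
definition rpp :: "complex \<Rightarrow> complex \<Rightarrow> bool" where "rpp r z \<longleftrightarrow> (\<exists>N::nat. N > 0 \<and> z = r^N)"

lemma rpp_nz: "\<forall>m::nat. m > 0 \<longrightarrow> r^m \<noteq> 1 \<Longrightarrow> rpp r z \<Longrightarrow> 1 - z \<noteq> 0"
  unfolding rpp_def by auto
lemma rp_rpp: "rpp r z \<Longrightarrow> rp r z" unfolding rpp_def rp_def by auto
lemma rp_mult: "rp r a \<Longrightarrow> rp r b \<Longrightarrow> rp r (a*b)"
  unfolding rp_def by (metis power_add)
lemma rp_pow: "rp r a \<Longrightarrow> rp r (a^i)"
  unfolding rp_def by (metis power_mult)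
lemma rpp_mult1: "rpp r a \<Longrightarrow> rp r b \<Longrightarrow> rpp r (a*b)"
  unfolding rp_def rpp_def by (metis add_gr_0 power_add)
lemma rpp_mult2: "rp r a \<Longrightarrow> rpp r b \<Longrightarrow> rpp r (a*b)"
  unfolding rp_def rpp_def by (metis add_gr_0 power_add)
lemma rpp_r: "rpp r r" unfolding rpp_def by (rule exI[of _ 1]) simp
lemma rpp_pow: "rpp r a \<Longrightarrow> 0 < i \<Longrightarrow> rpp r (a^i)"
  unfolding rpp_def by (metis nat_0_less_mult_iff power_mult)
lemmas rpp_intros = rp_rpp rp_mult rp_pow rpp_mult1 rpp_mult2 rpp_r rpp_pow

lemma nzpow:
  fixes r z :: complex
  assumes "\<forall>m::nat. m > 0 \<longrightarrow> r^m \<noteq> 1" "z = r^N" "0 < N"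
  shows "1 - z \<noteq> 0"
  using assms by auto

lemma part2:
  fixes r k q :: complex
  assumes r0: "r \<noteq> 0" and gen: "\<forall>m::nat. m > 0 \<longrightarrow> r ^ m \<noteq> 1" and qr: "q = r^2"
  shows "WP_Bailey_pair q k q
      (\<lambda>n. if n = 0 then 1 else (1 / r ^ n + r ^ (n + 1)) / (1 + r))
      (\<lambda>n. if n = 0 then 1 else qpoch k q n * qpoch (k / r) q n / (qpoch (r ^ 3) q n * qpoch q q n) * (1 / r ^ n))"
proof -
  have q0: "q \<noteq> 0" using r0 qr by simp
  have r1: "1 + r \<noteq> 0"
  proof
    assume "1 + r = 0"
    then have "r = -1" by (simp add: add_eq_0_iff)
    then have "r^2 = 1" by simp
    with gen show False by auto
  qed
  have rq: "rpp r q" using qr rpp_r rpp_pow[of r r 2] by simp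
  have rpq: "rp r q" using rq by (rule rp_rpp)
  have qj: "q^j = r^j * r^j" for j by (simp add: qr power_mult_distrib[symmetric] power2_eq_square)
  define \<alpha> where "\<alpha> = (\<lambda>n::nat. if n = 0 then 1 else (1 / r ^ n + r ^ (n + 1)) / (1 + r))"
  define \<beta> where "\<beta> = (\<lambda>n::nat. if n = 0 then 1 else qpoch k q n * qpoch (k / r) q n / (qpoch (r ^ 3) q n * qpoch q q n) * (1 / r ^ n))"
  define c where "c = (\<lambda>n::nat. (1 - k*q^n)*(1 - k/r*q^n)/((1 - r^3*q^n)*(1 - q*q^n)) * (1/r))"
  define C where "C = (\<lambda>n::nat. -(1 - k*q*(q^n*q^n))/((1+r)*(1 - q*q^n)*(1 - r^3*q^n)))"
  define F where "F = (\<lambda>n j. qpoch (k / q) q (n - j) * qpoch k q (n + j) / (qpoch q q (n - j) * qpoch (q * q) q (n + j)) * \<alpha> j)"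
  define G where "G = (\<lambda>n j. C n * (qpoch (k / q) q (Suc n - j) * qpoch k q (n + j) / (qpoch q q (Suc n - j) * qpoch (q * q) q (n + j))) * ((1 - q^j) / r^j))"
  have \<alpha>r: "\<alpha> j = (1 + r*q^j)/(1+r) * (1/r^j)" for j
  proof (cases "j = 0")
    case True then show ?thesis using r1 by (simp add: \<alpha>_def)
  next
    case False
    have "1 / r ^ j + r ^ (j + 1) = (1 + r*q^j) * (1/r^j)" using r0 by (simp add: qj field_simps)
    then show ?thesis using False by (simp add: \<alpha>_def)
  qed
  have \<beta>r: "\<beta> n = qpoch k q n * qpoch (k / r) q n / (qpoch (r ^ 3) q n * qpoch q q n) * (1 / r ^ n)" for n
    by (simp add: \<beta>_def)
  have step: "F (Suc n) j - c n * F n j = G n (Suc j) - G n j" if jn: "j \<le> n" for n j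
  proof -
    obtain m where n: "n = m + j" using jn by (metis le_add_diff_inverse2)
    have idx: "Suc n - j = Suc m" "n - j = m" "Suc n + j = Suc (m+j+j)" "n + Suc j = Suc (m+j+j)"
       "Suc n - Suc j = m" "n + j = m+j+j" by (simp_all add: n)
    have pw: "q^(m+j+j) = q^m*(q^j)^2" "q^n = q^m*q^j" by (simp_all add: n power_add power2_eq_square)
    define D where "D = qpoch (k/q) q m * qpoch k q (m+j+j) / (qpoch q q m * qpoch (q*q) q (m+j+j)) * (1/r^j)"
    have e1: "F (Suc n) j = D * ((1 - k/q*q^m)*(1 - k*(q^m*(q^j)^2))/((1 - q*q^m)*(1 - q*q*(q^m*(q^j)^2))) * ((1 + r*q^j)/(1+r)))"
      unfolding F_def D_def idx \<alpha>r by (simp add: qpoch_Suc pw divide_inverse inverse_mult_distrib mult_ac)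
    have e2: "F n j = D * ((1 + r*q^j)/(1+r))"
      unfolding F_def D_def idx \<alpha>r by (simp add: divide_inverse inverse_mult_distrib mult_ac)
    have e3: "G n (Suc j) = D * ((-(1 - k*q*((q^m*q^j)*(q^m*q^j)))/((1+r)*(1 - q*(q^m*q^j))*(1 - r^3*(q^m*q^j)))) * (1 - k*(q^m*(q^j)^2))/(1 - q*q*(q^m*(q^j)^2)) * ((1 - q*q^j)/r))"
      unfolding G_def D_def idx C_def by (simp add: qpoch_Suc pw divide_inverse inverse_mult_distrib mult_ac)
    have e4: "G n j = D * ((-(1 - k*q*((q^m*q^j)*(q^m*q^j)))/((1+r)*(1 - q*(q^m*q^j))*(1 - r^3*(q^m*q^j)))) * (1 - k/q*q^m)/(1 - q*q^m) * (1 - q^j))"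
      unfolding G_def D_def idx C_def by (simp add: qpoch_Suc pw divide_inverse inverse_mult_distrib mult_ac)
    have ec: "c n = (1 - k*(q^m*q^j))*(1 - k/r*(q^m*q^j))/((1 - r^3*(q^m*q^j))*(1 - q*(q^m*q^j))) * (1/r)"
      by (simp add: c_def pw)
    have K: "(1 - k/q*q^m)*(1 - k*(q^m*(q^j)^2))/((1 - q*q^m)*(1 - q*q*(q^m*(q^j)^2))) * ((1 + r*q^j)/(1+r))
      - ((1 - k*(q^m*q^j))*(1 - k/r*(q^m*q^j))/((1 - r^3*(q^m*q^j))*(1 - q*(q^m*q^j))) * (1/r)) * ((1 + r*q^j)/(1+r))
    = (-(1 - k*q*((q^m*q^j)*(q^m*q^j)))/((1+r)*(1 - q*(q^m*q^j))*(1 - r^3*(q^m*q^j)))) * (1 - k*(q^m*(q^j)^2))/(1 - q*q*(q^m*(q^j)^2)) * ((1 - q*q^j)/r)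
    - (-(1 - k*q*((q^m*q^j)*(q^m*q^j)))/((1+r)*(1 - q*(q^m*q^j))*(1 - r^3*(q^m*q^j)))) * (1 - k/q*q^m)/(1 - q*q^m) * (1 - q^j)"
    proof (rule core2[OF qr refl refl refl refl refl r0 q0 r1])
      show "1 - q*q^m \<noteq> 0" by (rule rpp_nz[OF gen]) (auto intro!: rpp_mult1 rp_mult rp_pow rpp_pow rpp_r rq rpq)
      show "1 - q*q*(q^m*(q^j)^2) \<noteq> 0" by (rule rpp_nz[OF gen]) (auto intro!: rpp_mult1 rp_mult rp_pow rpp_pow rpp_r rq rpq)
      show "1 - r^3*(q^m*q^j) \<noteq> 0" by (rule rpp_nz[OF gen]) (auto intro!: rpp_mult1 rp_mult rp_pow rpp_pow rpp_r rq rpq)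
      show "1 - q*(q^m*q^j) \<noteq> 0" by (rule rpp_nz[OF gen]) (auto intro!: rpp_mult1 rp_mult rp_pow rpp_pow rpp_r rq rpq)
    qed
    show ?thesis unfolding e1 e2 e3 e4 ec by (rule lin1[OF K])
  qed
  have fin: "F (Suc n) (Suc n) + G n (Suc n) - G n 0 = 0" for n
  proof -
    define D where "D = qpoch k q (Suc (n+n)) / qpoch (q*q) q (Suc (n+n)) * (1/r^(Suc n))"
    have e1: "F (Suc n) (Suc n) = D * ((1 - k*(q*(q^n*q^n)))/(1 - q*q*(q*(q^n*q^n))) * ((1 + r*(q*q^n))/(1+r)))"
    proof -
      have "Suc n + Suc n = Suc (Suc (n+n))" by simp
      then show ?thesis unfolding F_def D_def \<alpha>r
        by (simp add: qpoch_Suc power_add divide_inverse inverse_mult_distrib mult_ac)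
    qed
    have e2: "G n (Suc n) = D * ((-(1 - k*q*(q^n*q^n))/((1+r)*(1 - q*q^n)*(1 - r^3*q^n))) * (1 - q*q^n))"
    proof -
      have "n + Suc n = Suc (n+n)" by simp
      then show ?thesis unfolding G_def D_def C_def
        by (simp add: divide_inverse inverse_mult_distrib mult_ac)
    qed
    have e3: "G n 0 = 0" by (simp add: G_def)
    have K: "(1 - k*(q*(q^n*q^n)))/(1 - q*q*(q*(q^n*q^n))) * ((1 + r*(q*q^n))/(1+r))
     + (-(1 - k*q*(q^n*q^n))/((1+r)*(1 - q*q^n)*(1 - r^3*q^n))) * (1 - q*q^n) = 0"
    proof (rule core2fin[OF qr refl refl refl refl r0 r1])
      show "1 - q*q*(q*(q^n*q^n)) \<noteq> 0" by (rule rpp_nz[OF gen]) (auto intro!: rpp_mult1 rp_mult rp_pow rpp_pow rpp_r rq rpq)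
      show "1 - q*q^n \<noteq> 0" by (rule rpp_nz[OF gen]) (auto intro!: rpp_mult1 rp_mult rp_pow rpp_pow rpp_r rq rpq)
      show "1 - r^3*q^n \<noteq> 0" by (rule rpp_nz[OF gen]) (auto intro!: rpp_mult1 rp_mult rp_pow rpp_pow rpp_r rq rpq)
    qed
    show ?thesis unfolding e1 e2 e3 by (rule lin2[OF K])
  qed
  have brec: "\<beta> (Suc n) = c n * \<beta> n" for n
    unfolding \<beta>r c_def by (simp add: qpoch_Suc divide_inverse inverse_mult_distrib mult_ac)
  have "WP_Bailey_pair q k q \<alpha> \<beta>"
  proof (rule WP_intro[where c = c])
    show "\<alpha> 0 = 1" by (simp add: \<alpha>_def)
    show "\<beta> 0 = 1" by (simp add: \<beta>_def)
    show "\<beta> (Suc n) = c n * \<beta> n" for n by (rule brec)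
    fix n
    have "(\<Sum>j=0..Suc n. F (Suc n) j) = c n * (\<Sum>j=0..n. F n j)"
      by (rule tele) (use step fin in auto)
    then show "(\<Sum>j=0..Suc n. qpoch (k / q) q (Suc n - j) * qpoch k q (Suc n + j) / (qpoch q q (Suc n - j) * qpoch (q * q) q (Suc n + j)) * \<alpha> j)
         = c n * (\<Sum>j=0..n. qpoch (k / q) q (n - j) * qpoch k q (n + j) / (qpoch q q (n - j) * qpoch (q * q) q (n + j)) * \<alpha> j)"
      by (simp add: F_def)
  qed
  then show ?thesis by (simp add: \<alpha>_def \<beta>_def)
qed


lemma sq_pow: "(q^2)^n = ((q::complex)^n)^2" by (metis power_mult mult.commute)

lemma part1:
  fixes r k q :: complex
  assumes r0: "r \<noteq> 0" and gen: "\<forall>m::nat. m > 0 \<longrightarrow> r ^ m \<noteq> 1" and qr: "q = r^2"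
  shows "WP_Bailey_pair q k q
      (\<lambda>n. if n = 0 then 1 else (-1) ^ n * (1 / q ^ n - q ^ (n + 1)) / (1 - q))
      (\<lambda>n. if n = 0 then 1 else (-1) ^ n * qpoch (k ^ 2) (q ^ 2) n / (q ^ n * qpoch (q ^ 2) (q ^ 2) n))"
proof -
  have q0: "q \<noteq> 0" using r0 qr by simp
  have rq: "rpp r q" using qr rpp_r rpp_pow[of r r 2] by simp
  have rpq: "rp r q" using rq by (rule rp_rpp)
  have q1: "1 - q \<noteq> 0" by (rule rpp_nz[OF gen]) (rule rq)
  define \<alpha> where "\<alpha> = (\<lambda>n::nat. if n = 0 then 1 else (-1) ^ n * (1 / q ^ n - q ^ (n + 1)) / (1 - q))"
  define \<beta> where "\<beta> = (\<lambda>n::nat. if n = 0 then 1 else (-1) ^ n * qpoch (k ^ 2) (q ^ 2) n / (q ^ n * qpoch (q ^ 2) (q ^ 2) n))"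
  define E where "E = (\<lambda>j::nat. (-1)^j / q^j :: complex)"
  define \<gamma> where "\<gamma> = (\<lambda>j::nat. (1 - (q^j)^2) * E j)"
  define c where "c = (\<lambda>n::nat. (k^2*(q^2)^n - 1)/(q*(1 - q^2*(q^2)^n)))"
  define C where "C = (\<lambda>n::nat. -(1 - k*q*(q^n*q^n))/((1-q)*(1 - q^2*((q^n)^2))))"
  define F where "F = (\<lambda>n j. qpoch (k / q) q (n - j) * qpoch k q (n + j) / (qpoch q q (n - j) * qpoch (q * q) q (n + j)) * \<alpha> j)"
  define G where "G = (\<lambda>n j. C n * (qpoch (k / q) q (Suc n - j) * qpoch k q (n + j) / (qpoch q q (Suc n - j) * qpoch (q * q) q (n + j))) * \<gamma> j)"
  have \<alpha>r: "\<alpha> j = (1 - q*(q^j)^2)/(1-q) * E j" for j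
  proof (cases "j = 0")
    case True then show ?thesis using q1 by (simp add: \<alpha>_def E_def)
  next
    case False
    have "(-1) ^ j * (1 / q ^ j - q ^ (j + 1)) / (1 - q) = (1 - q*(q^j)^2)/(1-q) * ((-1)^j / q^j)"
      using q0 by (simp add: field_simps power2_eq_square)
    then show ?thesis using False by (simp add: \<alpha>_def E_def)
  qed
  have \<gamma>S: "\<gamma> (Suc j) = (-(1 - q^2*(q^j)^2)/q) * E j" for j
    using q0 by (simp add: \<gamma>_def E_def field_simps power2_eq_square)
  have \<beta>r: "\<beta> n = (-1) ^ n * qpoch (k ^ 2) (q ^ 2) n / (q ^ n * qpoch (q ^ 2) (q ^ 2) n)" for n
    by (simp add: \<beta>_def)
  have step: "F (Suc n) j - c n * F n j = G n (Suc j) - G n j" if jn: "j \<le> n" for n j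
  proof -
    obtain m where n: "n = m + j" using jn by (metis le_add_diff_inverse2)
    have idx: "Suc n - j = Suc m" "n - j = m" "Suc n + j = Suc (m+j+j)" "n + Suc j = Suc (m+j+j)"
       "Suc n - Suc j = m" "n + j = m+j+j" by (simp_all add: n)
    have pw: "q^(m+j+j) = q^m*(q^j)^2" "(q^2)^n = (q^m*q^j)^2" "q^n = q^m*q^j"
      by (simp_all add: n power_add power2_eq_square sq_pow power_mult_distrib)
    define D where "D = qpoch (k/q) q m * qpoch k q (m+j+j) / (qpoch q q m * qpoch (q*q) q (m+j+j)) * E j"
    have e1: "F (Suc n) j = D * ((1 - k/q*q^m)*(1 - k*(q^m*(q^j)^2))/((1 - q*q^m)*(1 - q*q*(q^m*(q^j)^2))) * ((1 - q*(q^j)^2)/(1-q)))"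
      unfolding F_def D_def idx \<alpha>r by (simp add: qpoch_Suc pw divide_inverse inverse_mult_distrib mult_ac)
    have e2: "F n j = D * ((1 - q*(q^j)^2)/(1-q))"
      unfolding F_def D_def idx \<alpha>r by (simp add: divide_inverse inverse_mult_distrib mult_ac)
    have e3: "G n (Suc j) = D * ((-(1 - k*q*((q^m*q^j)*(q^m*q^j)))/((1-q)*(1 - q^2*((q^m*q^j)^2)))) * (1 - k*(q^m*(q^j)^2))/(1 - q*q*(q^m*(q^j)^2)) * (-(1 - q^2*(q^j)^2)/q))"
      unfolding G_def D_def idx C_def \<gamma>S by (simp add: qpoch_Suc pw divide_inverse inverse_mult_distrib mult_ac)
    have e4: "G n j = D * ((-(1 - k*q*((q^m*q^j)*(q^m*q^j)))/((1-q)*(1 - q^2*((q^m*q^j)^2)))) * (1 - k/q*q^m)/(1 - q*q^m) * (1 - (q^j)^2))"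
      unfolding G_def D_def idx C_def \<gamma>_def by (simp add: qpoch_Suc pw divide_inverse inverse_mult_distrib mult_ac)
    have ec: "c n = -(1 - k^2*((q^m*q^j)^2))/(q*(1 - q^2*((q^m*q^j)^2)))"
      by (simp add: c_def pw)
    have K: "(1 - k/q*q^m)*(1 - k*(q^m*(q^j)^2))/((1 - q*q^m)*(1 - q*q*(q^m*(q^j)^2))) * ((1 - q*(q^j)^2)/(1-q))
      - (-(1 - k^2*((q^m*q^j)^2))/(q*(1 - q^2*((q^m*q^j)^2)))) * ((1 - q*(q^j)^2)/(1-q))
    = (-(1 - k*q*((q^m*q^j)*(q^m*q^j)))/((1-q)*(1 - q^2*((q^m*q^j)^2)))) * (1 - k*(q^m*(q^j)^2))/(1 - q*q*(q^m*(q^j)^2)) * (-(1 - q^2*(q^j)^2)/q)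
    - (-(1 - k*q*((q^m*q^j)*(q^m*q^j)))/((1-q)*(1 - q^2*((q^m*q^j)^2)))) * (1 - k/q*q^m)/(1 - q*q^m) * (1 - (q^j)^2)"
    proof (rule core1[OF refl refl refl refl q0 q1])
      show "1 - q*q^m \<noteq> 0" by (rule rpp_nz[OF gen]) (auto intro!: rpp_mult1 rp_mult rp_pow rpp_pow rpp_r rq rpq)
      show "1 - q*q*(q^m*(q^j)^2) \<noteq> 0" by (rule rpp_nz[OF gen]) (auto intro!: rpp_mult1 rp_mult rp_pow rpp_pow rpp_r rq rpq)
      show "1 - q^2*((q^m*q^j)^2) \<noteq> 0" by (rule rpp_nz[OF gen]) (auto intro!: rpp_mult1 rp_mult rp_pow rpp_pow rpp_r rq rpq)
    qed
    show ?thesis unfolding e1 e2 e3 e4 ec by (rule lin1[OF K])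
  qed
  have fin: "F (Suc n) (Suc n) + G n (Suc n) - G n 0 = 0" for n
  proof -
    define D where "D = qpoch k q (Suc (n+n)) / qpoch (q*q) q (Suc (n+n)) * E (Suc n)"
    have e1: "F (Suc n) (Suc n) = D * ((1 - k*(q*(q^n*q^n)))/(1 - q*q*(q*(q^n*q^n))) * ((1 - q*(q*q^n)^2)/(1-q)))"
    proof -
      have "Suc n + Suc n = Suc (Suc (n+n))" by simp
      then show ?thesis unfolding F_def D_def \<alpha>r
        by (simp add: qpoch_Suc power_add divide_inverse inverse_mult_distrib mult_ac)
    qed
    have e2: "G n (Suc n) = D * ((-(1 - k*q*(q^n*q^n))/((1-q)*(1 - q^2*((q^n)^2)))) * (1 - (q*q^n)^2))"
    proof -
      have "n + Suc n = Suc (n+n)" by simp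
      then show ?thesis unfolding G_def D_def C_def \<gamma>_def
        by (simp add: divide_inverse inverse_mult_distrib mult_ac)
    qed
    have e3: "G n 0 = 0" by (simp add: G_def \<gamma>_def)
    have K: "(1 - k*(q*(q^n*q^n)))/(1 - q*q*(q*(q^n*q^n))) * ((1 - q*(q*q^n)^2)/(1-q))
     + (-(1 - k*q*(q^n*q^n))/((1-q)*(1 - q^2*((q^n)^2)))) * (1 - (q*q^n)^2) = 0"
    proof (rule core1fin[OF refl refl refl q0 q1])
      show "1 - q*q*(q*(q^n*q^n)) \<noteq> 0" by (rule rpp_nz[OF gen]) (auto intro!: rpp_mult1 rp_mult rp_pow rpp_pow rpp_r rq rpq)
      show "1 - q^2*((q^n)^2) \<noteq> 0" by (rule rpp_nz[OF gen]) (auto intro!: rpp_mult1 rp_mult rp_pow rpp_pow rpp_r rq rpq)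
    qed
    show ?thesis unfolding e1 e2 e3 by (rule lin2[OF K])
  qed
  have brec: "\<beta> (Suc n) = c n * \<beta> n" for n
    unfolding \<beta>r c_def apply (simp add: qpoch_Suc divide_inverse inverse_mult_distrib mult_ac)
    by (simp add: algebra_simps)
  have "WP_Bailey_pair q k q \<alpha> \<beta>"
  proof (rule WP_intro[where c = c])
    show "\<alpha> 0 = 1" by (simp add: \<alpha>_def)
    show "\<beta> 0 = 1" by (simp add: \<beta>_def)
    show "\<beta> (Suc n) = c n * \<beta> n" for n by (rule brec)
    fix n
    have "(\<Sum>j=0..Suc n. F (Suc n) j) = c n * (\<Sum>j=0..n. F n j)"
      by (rule tele) (use step fin in auto)
    then show "(\<Sum>j=0..Suc n. qpoch (k / q) q (Suc n - j) * qpoch k q (Suc n + j) / (qpoch q q (Suc n - j) * qpoch (q * q) q (Suc n + j)) * \<alpha> j)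
         = c n * (\<Sum>j=0..n. qpoch (k / q) q (n - j) * qpoch k q (n + j) / (qpoch q q (n - j) * qpoch (q * q) q (n + j)) * \<alpha> j)"
      by (simp add: F_def)
  qed
  then show ?thesis by (simp add: \<alpha>_def \<beta>_def)
qed


lemma core3z:
  fixes q X k d :: complex
  assumes H: "d = 1 - q*X"
  assumes NZ: "q \<noteq> 0" "X \<noteq> 0" "d \<noteq> 0"
  shows "(1-k*X)*(1-k*X)/(d*d) - (-(1 - k*X)/(d*(q*X))) * 1
     = (-(1 - k*X)/d - 1/(q*X)) * (1-k*X)/d * (-1) - 0"
proof -
  have P: "(1-k*X)*(1-k*X)*q*X + (1-k*X)*d = (1-k*X)*((1-k*X)*q*X + d)" by algebra
  show ?thesis using NZ by (simp add: field_simps)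
qed

lemma part3:
  fixes r k q :: complex
  assumes r0: "r \<noteq> 0" and gen: "\<forall>m::nat. m > 0 \<longrightarrow> r ^ m \<noteq> 1" and qr: "q = r^2"
  shows "WP_Bailey_pair 1 k q
      (\<lambda>n. if n = 0 then 1 else (-1) ^ n * (1 / r ^ (n ^ 2)) * (1 / r ^ n + r ^ n))
      (\<lambda>n. if n = 0 then 1 else (-1) ^ n * qpoch k q n / (r ^ (n ^ 2 + n) * qpoch q q n))"
proof -
  have q0: "q \<noteq> 0" using r0 qr by simp
  have rq: "rpp r q" using qr rpp_r rpp_pow[of r r 2] by simp
  have rpq: "rp r q" using rq by (rule rp_rpp)
  have qj: "q^j = r^j * r^j" for j by (simp add: qr power_mult_distrib[symmetric] power2_eq_square)
  define \<alpha> where "\<alpha> = (\<lambda>n::nat. if n = 0 then 1 else (-1) ^ n * (1 / r ^ (n ^ 2)) * (1 / r ^ n + r ^ n))"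
  define \<beta> where "\<beta> = (\<lambda>n::nat. if n = 0 then 1 else (-1) ^ n * qpoch k q n / (r ^ (n ^ 2 + n) * qpoch q q n))"
  define E where "E = (\<lambda>j::nat. (-1)^j / (r^(j^2) * r^j) :: complex)"
  define \<gamma> where "\<gamma> = (\<lambda>j::nat. q^j * E j)"
  define c where "c = (\<lambda>n::nat. -(1 - k*q^n)/((1 - q*q^n)*(q*q^n)))"
  define C where "C = (\<lambda>n::nat. -(1 - k*q^n)/(1 - q*q^n) - 1/(q*q^n))"
  define F where "F = (\<lambda>n j. qpoch (k / 1) q (n - j) * qpoch k q (n + j) / (qpoch q q (n - j) * qpoch (1 * q) q (n + j)) * \<alpha> j)"
  define G where "G = (\<lambda>n j. if j = 0 then 0 else C n * (qpoch k q (Suc n - j) * qpoch k q (n + j) / (qpoch q q (Suc n - j) * qpoch q q (n + j))) * \<gamma> j)"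
  have \<alpha>r: "\<alpha> j = (1 + q^j) * E j" if "j \<noteq> 0" for j
  proof -
    have "(-1) ^ j * (1 / r ^ (j ^ 2)) * (1 / r ^ j + r ^ j) = (1 + q^j) * ((-1)^j / (r^(j^2) * r^j))"
      using r0 by (simp add: qj field_simps)
    then show ?thesis using that by (simp add: \<alpha>_def E_def)
  qed
  have \<gamma>S: "\<gamma> (Suc j) = - E j" for j
  proof -
    have ex: "(Suc j)^2 = j^2 + j + j + 1" by (simp add: power2_eq_square)
    have "r^((Suc j)^2) = r^(j^2) * r^j * r^j * r" unfolding ex by (simp add: power_add)
    then show ?thesis using r0 by (simp add: \<gamma>_def E_def qj qr field_simps power2_eq_square)
  qed
  have \<beta>r: "\<beta> n = (-1) ^ n * qpoch k q n / (r ^ (n ^ 2 + n) * qpoch q q n)" for n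
    by (simp add: \<beta>_def)
  have ntac: "1 - z \<noteq> 0" if "rpp r z" for z using that by (rule rpp_nz[OF gen])
  have step: "F (Suc n) j - c n * F n j = G n (Suc j) - G n j" if jn: "j \<le> n" for n j
  proof (cases "j = 0")
    case True
    define D where "D = qpoch k q n * qpoch k q n / (qpoch q q n * qpoch q q n)"
    have e1: "F (Suc n) j = D * ((1-k*q^n)*(1-k*q^n)/((1-q*q^n)*(1-q*q^n)))"
      unfolding F_def D_def True by (simp add: \<alpha>_def qpoch_Suc divide_inverse inverse_mult_distrib mult_ac)
    have e2: "F n j = D * 1"
      unfolding F_def D_def True by (simp add: \<alpha>_def)
    have e3: "G n (Suc j) = D * ((-(1 - k*q^n)/(1 - q*q^n) - 1/(q*q^n)) * (1-k*q^n)/(1-q*q^n) * (-1))"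
      unfolding G_def D_def True C_def using \<gamma>S[of 0] by (simp add: E_def qpoch_Suc divide_inverse inverse_mult_distrib mult_ac)
    have e4: "G n j = D * 0" unfolding G_def True by simp
    have K: "(1-k*q^n)*(1-k*q^n)/((1-q*q^n)*(1-q*q^n)) - (-(1 - k*q^n)/((1 - q*q^n)*(q*q^n))) * 1
     = (-(1 - k*q^n)/(1 - q*q^n) - 1/(q*q^n)) * (1-k*q^n)/(1-q*q^n) * (-1) - 0"
    proof (rule core3z[OF refl q0])
      show "q^n \<noteq> 0" using q0 by simp
      show "1 - q*q^n \<noteq> 0" by (rule ntac) (auto intro!: rpp_mult1 rp_mult rp_pow rpp_pow rpp_r rq rpq)
    qed
    show ?thesis unfolding e1 e2 e3 e4 c_def by (rule lin1[OF K])
  next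
    case False
    obtain m where n: "n = m + j" using jn by (metis le_add_diff_inverse2)
    have idx: "Suc n - j = Suc m" "n - j = m" "Suc n + j = Suc (m+j+j)" "n + Suc j = Suc (m+j+j)"
       "Suc n - Suc j = m" "n + j = m+j+j" by (simp_all add: n)
    have pw: "q^(m+j+j) = q^m*(q^j)^2" "q^n = q^m*q^j"
      by (simp_all add: n power_add power2_eq_square)
    define D where "D = qpoch k q m * qpoch k q (m+j+j) / (qpoch q q m * qpoch q q (m+j+j)) * E j"
    have e1: "F (Suc n) j = D * ((1 - k*q^m)*(1 - k*(q^m*(q^j)^2))/((1 - q*q^m)*(1 - q*(q^m*(q^j)^2))) * (1 + q^j))"
      unfolding F_def D_def idx \<alpha>r[OF False] by (simp add: qpoch_Suc pw divide_inverse inverse_mult_distrib mult_ac)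
    have e2: "F n j = D * (1 + q^j)"
      unfolding F_def D_def idx \<alpha>r[OF False] by (simp add: divide_inverse inverse_mult_distrib mult_ac)
    have e3: "G n (Suc j) = D * ((-(1 - k*(q^m*q^j))/(1 - q*(q^m*q^j)) - 1/(q*(q^m*q^j))) * (1 - k*(q^m*(q^j)^2))/(1 - q*(q^m*(q^j)^2)) * (-1))"
      unfolding G_def D_def idx C_def \<gamma>S by (simp add: qpoch_Suc pw divide_inverse inverse_mult_distrib mult_ac)
    have e4: "G n j = D * ((-(1 - k*(q^m*q^j))/(1 - q*(q^m*q^j)) - 1/(q*(q^m*q^j))) * (1 - k*q^m)/(1 - q*q^m) * q^j)"
      unfolding G_def D_def idx C_def \<gamma>_def using False by (simp add: qpoch_Suc pw divide_inverse inverse_mult_distrib mult_ac)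
    have ec: "c n = -(1 - k*(q^m*q^j))/((1 - q*(q^m*q^j))*(q*(q^m*q^j)))"
      by (simp add: c_def pw)
    have K: "(1 - k*q^m)*(1 - k*(q^m*(q^j)^2))/((1 - q*q^m)*(1 - q*(q^m*(q^j)^2))) * (1 + q^j)
      - (-(1 - k*(q^m*q^j))/((1 - q*(q^m*q^j))*(q*(q^m*q^j)))) * (1 + q^j)
    = (-(1 - k*(q^m*q^j))/(1 - q*(q^m*q^j)) - 1/(q*(q^m*q^j))) * (1 - k*(q^m*(q^j)^2))/(1 - q*(q^m*(q^j)^2)) * (-1)
    - (-(1 - k*(q^m*q^j))/(1 - q*(q^m*q^j)) - 1/(q*(q^m*q^j))) * (1 - k*q^m)/(1 - q*q^m) * q^j"
    proof (rule core3[OF refl refl refl q0])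
      show "q^m \<noteq> 0" "q^j \<noteq> 0" using q0 by simp_all
      show "1 - q*q^m \<noteq> 0" by (rule ntac) (auto intro!: rpp_mult1 rp_mult rp_pow rpp_pow rpp_r rq rpq)
      show "1 - q*(q^m*(q^j)^2) \<noteq> 0" by (rule ntac) (auto intro!: rpp_mult1 rp_mult rp_pow rpp_pow rpp_r rq rpq)
      show "1 - q*(q^m*q^j) \<noteq> 0" by (rule ntac) (auto intro!: rpp_mult1 rp_mult rp_pow rpp_pow rpp_r rq rpq)
    qed
    show ?thesis unfolding e1 e2 e3 e4 ec by (rule lin1[OF K])
  qed
  have fin: "F (Suc n) (Suc n) + G n (Suc n) - G n 0 = 0" for n
  proof -
    define D where "D = qpoch k q (Suc (n+n)) / qpoch q q (Suc (n+n)) * E (Suc n)"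
    have e1: "F (Suc n) (Suc n) = D * ((1 - k*(q*(q^n*q^n)))/(1 - q*(q*(q^n*q^n))) * (1 + q*q^n))"
    proof -
      have "Suc n + Suc n = Suc (Suc (n+n))" by simp
      moreover have "\<alpha> (Suc n) = (1 + q*q^n) * E (Suc n)" using \<alpha>r[of "Suc n"] by simp
      ultimately show ?thesis unfolding F_def D_def
        by (simp add: qpoch_Suc power_add divide_inverse inverse_mult_distrib mult_ac)
    qed
    have e2: "G n (Suc n) = D * ((-(1 - k*q^n)/(1 - q*q^n) - 1/(q*q^n)) * (q*q^n))"
    proof -
      have "n + Suc n = Suc (n+n)" by simp
      then show ?thesis unfolding G_def D_def C_def \<gamma>_def
        by (simp add: divide_inverse inverse_mult_distrib mult_ac)
    qed
    have e3: "G n 0 = 0" by (simp add: G_def)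
    have K: "(1 - k*(q*(q^n*q^n)))/(1 - q*(q*(q^n*q^n))) * (1 + q*q^n) + (-(1 - k*q^n)/(1 - q*q^n) - 1/(q*q^n)) * (q*q^n) = 0"
    proof (rule core3fin[OF refl refl q0])
      show "q^n \<noteq> 0" using q0 by simp
      show "1 - q*(q*(q^n*q^n)) \<noteq> 0" by (rule ntac) (auto intro!: rpp_mult1 rp_mult rp_pow rpp_pow rpp_r rq rpq)
      show "1 - q*q^n \<noteq> 0" by (rule ntac) (auto intro!: rpp_mult1 rp_mult rp_pow rpp_pow rpp_r rq rpq)
    qed
    show ?thesis unfolding e1 e2 e3 by (rule lin2[OF K])
  qed
  have brec: "\<beta> (Suc n) = c n * \<beta> n" for n
  proof -
    have ex: "(Suc n)^2 + Suc n = (n^2 + n) + 2 * Suc n" by (simp add: power2_eq_square)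
    have rr: "r^((Suc n)^2 + Suc n) = r^(n^2+n) * (q*q^n)"
    proof -
      have q2: "q*q^n = r^(2*Suc n)" unfolding qr by (simp only: power_mult power_Suc)
      show ?thesis unfolding ex power_add q2 by simp
    qed
    show ?thesis unfolding \<beta>r c_def rr apply (simp add: qpoch_Suc divide_inverse inverse_mult_distrib mult_ac)
      by (simp add: algebra_simps)
  qed
  have "WP_Bailey_pair 1 k q \<alpha> \<beta>"
  proof (rule WP_intro[where c = c])
    show "\<alpha> 0 = 1" by (simp add: \<alpha>_def)
    show "\<beta> 0 = 1" by (simp add: \<beta>_def)
    show "\<beta> (Suc n) = c n * \<beta> n" for n by (rule brec)
    fix n
    have "(\<Sum>j=0..Suc n. F (Suc n) j) = c n * (\<Sum>j=0..n. F n j)"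
      by (rule tele) (use step fin in auto)
    then show "(\<Sum>j=0..Suc n. qpoch (k / 1) q (Suc n - j) * qpoch k q (Suc n + j) / (qpoch q q (Suc n - j) * qpoch (1 * q) q (Suc n + j)) * \<alpha> j)
         = c n * (\<Sum>j=0..n. qpoch (k / 1) q (n - j) * qpoch k q (n + j) / (qpoch q q (n - j) * qpoch (1 * q) q (n + j)) * \<alpha> j)"
      by (simp only: F_def)
  qed
  then show ?thesis by (simp add: \<alpha>_def \<beta>_def)
qed



theorem mainTheorem6:
  fixes r k :: complex
  assumes r_nz: "r \<noteq> 0"
    and r_generic: "\<forall>m::nat. m > 0 \<longrightarrow> r ^ m \<noteq> 1"
  defines "q \<equiv> r ^ 2"
  shows
   "WP_Bailey_pair q k q
      (\<lambda>n. if n = 0 then 1 else (-1) ^ n * (1 / q ^ n - q ^ (n + 1)) / (1 - q))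
      (\<lambda>n. if n = 0 then 1 else (-1) ^ n * qpoch (k ^ 2) (q ^ 2) n / (q ^ n * qpoch (q ^ 2) (q ^ 2) n))
  \<and> WP_Bailey_pair q k q
      (\<lambda>n. if n = 0 then 1 else (1 / r ^ n + r ^ (n + 1)) / (1 + r))
      (\<lambda>n. if n = 0 then 1 else qpoch k q n * qpoch (k / r) q n / (qpoch (r ^ 3) q n * qpoch q q n) * (1 / r ^ n))
  \<and> WP_Bailey_pair 1 k q
      (\<lambda>n. if n = 0 then 1 else (-1) ^ n * (1 / r ^ (n ^ 2)) * (1 / r ^ n + r ^ n))
      (\<lambda>n. if n = 0 then 1 else (-1) ^ n * qpoch k q n / (r ^ (n ^ 2 + n) * qpoch q q n))"
proof -
  have qr: "q = r^2" by (simp add: q_def)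
  show ?thesis
    using part1[OF r_nz r_generic qr] part2[OF r_nz r_generic qr] part3[OF r_nz r_generic qr]
    by blast
qed

end
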